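(* Let $L$ be a frame and $f\in\overline{\mathrm{F}}(L)$. The following are equivalent: (1) for every $g\in\overline{\mathrm{F}}(L)$, $f\vee^{\overline{\mathrm{F}}(L)}g=\boldsymbol{+\infty}$ implies $g=\boldsymbol{+\infty}$; (2) $\big(\bigvee_{s\in\mathbb{Q}}f(\textsf{---},s)\big)^\ast=0$; (3) $\bigwedge_{r\in\mathbb{Q}}f(r,\textsf{---})=0$.
   Context: $\mathbb{Q}$ is the rationals. A sublocale of $L$ is a subset closed under arbitrary meets and such that $x\to s\in S$ for $x\in L$, $s\in S$; $\mathrm{coS}(L)$ is the frame of all sublocales ordered by reverse inclusion (bottom $0=L$, top $1=\{1\}$); all lattice operations and pseudocomplements $^\ast$ here are taken in $\mathrm{coS}(L)$. The frame $\mathfrak{L}(\overline{\mathbb{IR}})$ is presented by generators $(r,\textsf{---})$, $(\textsf{---},s)$ ($r,s\in\mathbb{Q}$) subject to (r1) $(r,\textsf{---})\wedge(\textsf{---},s)=0$ whenever $r\ge s$; (r3) $(r,\textsf{---})=\bigvee_{s>r}(s,\textsf{---})$; (r4) $(\textsf{---},s)=\bigvee_{r<s}(\textsf{---},r)$. $\overline{\mathrm{F}}(L)$ (arbitrary extended real functions on $L$) is the set of frame homomorphisms $f\colon\mathfrak{L}(\overline{\mathbb{IR}})\to\mathrm{coS}(L)$ with $f(r,\textsf{---})^\ast\le f(\textsf{---},s)$ and $f(\textsf{---},s)^\ast\le f(r,\textsf{---})$ for all $r<s$, ordered by $f\le g$ iff $f(r,\textsf{---})\le g(r,\textsf{---})$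 and $g(\textsf{---},s)\le f(\textsf{---},s)$ for all $r,s$; it is a complete lattice. $\boldsymbol{+\infty}$ is its top element, given by $\boldsymbol{+\infty}(r,\textsf{---})=1$ and $\boldsymbol{+\infty}(\textsf{---},s)=0$ for all $r,s$. *)

theory Defs
  imports Complex_Main
begin

definition is_frame :: "'a::complete_lattice itself \<Rightarrow> bool" where
  "is_frame _ \<longleftrightarrow> (\<forall>(x::'a) S. inf x (Sup S) = Sup ((inf x) ` S))"

definition himp :: "'a::complete_lattice \<Rightarrow> 'a \<Rightarrow> 'a" where
  "himp x y = Sup {z. inf z x \<le> y}"

text \<open>Sublocales of L (L = UNIV of type 'a).\<close>
definition sublocale_of :: "'a::complete_lattice set \<Rightarrow> bool" where
  "sublocale_of S \<longleftrightarrow> (\<forall>A. A \<subseteq> S \<longrightarrow> Inf A \<in> S) \<and> (\<forall>x. \<forall>s\<in>S. himp x s \<in> S)"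

text \<open>The frame coS(L): sublocales ordered by reverse inclusion.\<close>
definition coS_le :: "'a set \<Rightarrow> 'a set \<Rightarrow> bool" where
  "coS_le S T \<longleftrightarrow> T \<subseteq> S"

definition coS_bot :: "'a::complete_lattice set" where
  "coS_bot = UNIV"

definition coS_top :: "'a::complete_lattice set" where
  "coS_top = {top}"

definition coS_Sup :: "'a::complete_lattice set set \<Rightarrow> 'a set" where
  "coS_Sup \<S> = \<Inter>\<S>"

definition coS_Inf :: "'a::complete_lattice set set \<Rightarrow> 'a set" where
  "coS_Inf \<S> = \<Inter>{T. sublocale_of T \<and> \<Union>\<S> \<subseteq> T}"

definition coS_meet :: "'a::complete_lattice set \<Rightarrow> 'a set \<Rightarrow> 'a set" where
  "coS_meet S T = coS_Inf {S, T}"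

definition coS_pc :: "'a::complete_lattice set \<Rightarrow> 'a set" where
  "coS_pc S = coS_Sup {T. sublocale_of T \<and> coS_meet T S = coS_bot}"

text \<open>Generators of the frame of extended reals: Up r = (r,---), Down s = (---,s).\<close>
datatype gen = Up rat | Down rat

text \<open>A frame homomorphism from the presented frame to coS(L) is the same as an
  assignment of the generators satisfying the relations (r1),(r3),(r4).\<close>
definition Fbar :: "(gen \<Rightarrow> 'a::complete_lattice set) \<Rightarrow> bool" where
  "Fbar f \<longleftrightarrow>
     (\<forall>g. sublocale_of (f g)) \<and>
     (\<forall>r s. s \<le> r \<longrightarrow> coS_meet (f (Up r)) (f (Down s)) = coS_bot) \<and>
     (\<forall>r. f (Up r) = coS_Sup {f (Up s) | s. s > r}) \<and>
     (\<forall>s. f (Down s) = coS_Sup {f (Down r) | r. r < s}) \<and>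
     (\<forall>r s. r < s \<longrightarrow> coS_le (coS_pc (f (Up r))) (f (Down s))
                     \<and> coS_le (coS_pc (f (Down s))) (f (Up r)))"

definition Fle :: "(gen \<Rightarrow> 'a set) \<Rightarrow> (gen \<Rightarrow> 'a set) \<Rightarrow> bool" where
  "Fle f g \<longleftrightarrow> (\<forall>r. coS_le (f (Up r)) (g (Up r))) \<and> (\<forall>s. coS_le (g (Down s)) (f (Down s)))"

definition posinf :: "gen \<Rightarrow> 'a::complete_lattice set" where
  "posinf x = (case x of Up r \<Rightarrow> coS_top | Down s \<Rightarrow> coS_bot)"

definition Fjoin_is :: "(gen \<Rightarrow> 'a::complete_lattice set) \<Rightarrow> (gen \<Rightarrow> 'a set) \<Rightarrow> (gen \<Rightarrow> 'a set) \<Rightarrow> bool" where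
  "Fjoin_is f g h \<longleftrightarrow> Fbar h \<and> Fle f h \<and> Fle g h \<and>
     (\<forall>k. Fbar k \<and> Fle f k \<and> Fle g k \<longrightarrow> Fle h k)"

end

theory Submission
  imports Defs
begin

abbreviation SL :: "'a::complete_lattice set \<Rightarrow> bool" where "SL \<equiv> sublocale_of"

lemma himp_iff:
  fixes x y z :: "'a::complete_lattice"
  assumes fr: "is_frame TYPE('a)"
  shows "z \<le> himp x y \<longleftrightarrow> inf z x \<le> y"
proof
  assume "inf z x \<le> y" thus "z \<le> himp x y" unfolding himp_def by (auto intro: Sup_upper)
next
  assume h: "z \<le> himp x y"
  have "inf z x \<le> inf x (himp x y)" using h by (meson inf_le1 inf_le2 le_inf_iff order_trans)
  also have "\<dots> = Sup ((inf x) ` {z. inf z x \<le> y})" using fr unfolding is_frame_def himp_def by blast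
  also have "\<dots> \<le> y" by (auto intro!: Sup_least simp: inf_commute)
  finally show "inf z x \<le> y" .
qed

lemma SL_Inf: "SL S \<Longrightarrow> B \<subseteq> S \<Longrightarrow> Inf B \<in> S"
  unfolding sublocale_of_def by blast

lemma SL_top: "SL S \<Longrightarrow> top \<in> S"
proof -
  assume "SL S"
  then have "Inf {} \<in> S" by (rule SL_Inf) simp
  then show "top \<in> S" by simp
qed

lemma SL_inf: "SL S \<Longrightarrow> a \<in> S \<Longrightarrow> b \<in> S \<Longrightarrow> inf a b \<in> S"
proof -
  assume "SL S" "a \<in> S" "b \<in> S"
  then have "Inf {a, b} \<in> S" by (intro SL_Inf) auto
  then show "inf a b \<in> S" by simp
qed

lemma SL_himp: "SL S \<Longrightarrow> s \<in> S \<Longrightarrow> himp x s \<in> S"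
  unfolding sublocale_of_def by blast

lemma SL_Inter: "(\<And>T. T \<in> F \<Longrightarrow> SL T) \<Longrightarrow> SL (\<Inter>F)"
  unfolding sublocale_of_def by blast

lemma SL_UNIV: "SL UNIV"
  unfolding sublocale_of_def by blast

lemma SL_topset: "SL {top::'a::complete_lattice}"
proof -
  have "himp x top = (top::'a)" for x unfolding himp_def
    by (rule top_le, rule Sup_upper) simp
  moreover have "A \<subseteq> {top} \<Longrightarrow> Inf A = (top::'a)" for A
    by (auto simp: Inf_top_conv)
  ultimately show ?thesis unfolding sublocale_of_def by auto
qed

lemma meet_least: "SL W \<Longrightarrow> S \<subseteq> W \<Longrightarrow> T \<subseteq> W \<Longrightarrow> coS_meet S T \<subseteq> W"
  unfolding coS_meet_def coS_Inf_def by blast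

lemma meet_upper1: "S \<subseteq> coS_meet S T" and meet_upper2: "T \<subseteq> coS_meet S T"
  unfolding coS_meet_def coS_Inf_def by blast+

lemma meet_SL: "SL (coS_meet S T)"
  unfolding coS_meet_def coS_Inf_def by (rule SL_Inter) blast

lemma meet_mono: "S \<subseteq> S' \<Longrightarrow> T \<subseteq> T' \<Longrightarrow> coS_meet S T \<subseteq> coS_meet S' T'"
  unfolding coS_meet_def coS_Inf_def by (rule Inter_anti_mono) auto

lemma meet_comm: "coS_meet S T = coS_meet T S"
  unfolding coS_meet_def by (simp add: insert_commute)

lemma himp_inf:
  fixes x a b :: "'a::complete_lattice"
  assumes fr: "is_frame TYPE('a)"
  shows "himp x (inf a b) = inf (himp x a) (himp x b)"
proof (rule antisym)
  show "himp x (inf a b) \<le> inf (himp x a) (himp x b)"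
    using himp_iff[OF fr] by (metis le_inf_iff order_refl)
  have 1: "inf (himp x a) x \<le> a" using himp_iff[OF fr, of "himp x a" x a] by simp
  have 2: "inf (himp x b) x \<le> b" using himp_iff[OF fr, of "himp x b" x b] by simp
  have 3: "inf (inf (himp x a) (himp x b)) x \<le> inf (himp x a) x" by (rule inf_mono) simp_all
  have 4: "inf (inf (himp x a) (himp x b)) x \<le> inf (himp x b) x" by (rule inf_mono) simp_all
  have "inf (inf (himp x a) (himp x b)) x \<le> inf a b" using order_trans[OF 3 1] order_trans[OF 4 2] by simp
  then show "inf (himp x a) (himp x b) \<le> himp x (inf a b)" using himp_iff[OF fr] by blast
qed

lemma meet_char:
  fixes S T :: "'a::complete_lattice set"
  assumes fr: "is_frame TYPE('a)" and S: "SL S" and T: "SL T"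
  shows "coS_meet S T = {inf s t |s t. s \<in> S \<and> t \<in> T}" (is "_ = ?M")
proof -
  have MSL: "SL ?M"
    unfolding sublocale_of_def
  proof (intro conjI allI impI ballI)
    fix A assume A: "A \<subseteq> ?M"
    then have "\<forall>a\<in>A. \<exists>s t. a = inf s t \<and> s \<in> S \<and> t \<in> T" by blast
    then have "\<forall>a\<in>A. \<exists>p. a = inf (fst p) (snd p) \<and> fst p \<in> S \<and> snd p \<in> T" by simp
    from bchoice[OF this] obtain pf where
      pf: "\<forall>a\<in>A. a = inf (fst (pf a)) (snd (pf a)) \<and> fst (pf a) \<in> S \<and> snd (pf a) \<in> T" by (elim exE)
    define sf where "sf a = fst (pf a)" for a
    define tf where "tf a = snd (pf a)" for a
    have st: "\<forall>a\<in>A. a = inf (sf a) (tf a) \<and> sf a \<in> S \<and> tf a \<in> T"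
      using pf unfolding sf_def tf_def by simp
    have "(\<lambda>a. inf (sf a) (tf a)) ` A = id ` A" by (rule image_cong) (use st in auto)
    then have "Inf A = Inf ((\<lambda>a. inf (sf a) (tf a)) ` A)" by simp
    also have "\<dots> = inf (INF a\<in>A. sf a) (INF a\<in>A. tf a)" by (simp add: INF_inf_distrib)
    finally have "Inf A = inf (INF a\<in>A. sf a) (INF a\<in>A. tf a)" .
    moreover have "(INF a\<in>A. sf a) \<in> S" by (rule SL_Inf[OF S]) (use st in blast)
    moreover have "(INF a\<in>A. tf a) \<in> T" by (rule SL_Inf[OF T]) (use st in blast)
    ultimately show "Inf A \<in> ?M" by blast
  next
    fix x m assume "m \<in> ?M"
    then obtain s t where "m = inf s t" "s \<in> S" "t \<in> T" by blast
    then have "himp x m = inf (himp x s) (himp x t)" "himp x s \<in> S" "himp x t \<in> T"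
      using himp_inf[OF fr] SL_himp[OF S] SL_himp[OF T] by auto
    then show "himp x m \<in> ?M" by blast
  qed
  have "coS_meet S T \<subseteq> ?M"
  proof (rule meet_least[OF MSL])
    show "S \<subseteq> ?M"
    proof
      fix x assume "x \<in> S" moreover have "x = inf x top" by simp
      ultimately show "x \<in> ?M" using SL_top[OF T] by blast
    qed
    show "T \<subseteq> ?M"
    proof
      fix x assume "x \<in> T" moreover have "x = inf top x" by simp
      ultimately show "x \<in> ?M" using SL_top[OF S] by blast
    qed
  qed
  moreover have "?M \<subseteq> coS_meet S T"
  proof
    fix x assume "x \<in> ?M"
    then obtain s t where x: "x = inf s t" "s \<in> S" "t \<in> T" by blast
    have "s \<in> coS_meet S T" using x(2) meet_upper1 by blast
    moreover have "t \<in> coS_meet S T" using x(3) meet_upper2 by blast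
    ultimately show "x \<in> coS_meet S T" unfolding x(1) by (rule SL_inf[OF meet_SL])
  qed
  ultimately show ?thesis by blast
qed

lemma distrib:
  fixes S :: "'a::complete_lattice set"
  assumes fr: "is_frame TYPE('a)" and S: "SL S" and FS: "\<And>T. T \<in> F \<Longrightarrow> SL T"
    and M: "\<And>T. T \<in> F \<Longrightarrow> coS_meet S T = UNIV"
  shows "coS_meet S (\<Inter>F) = UNIV"
proof -
  have IS: "SL (\<Inter>F)" using FS by (rule SL_Inter)
  have "a \<in> coS_meet S (\<Inter>F)" for a
  proof -
    define s where "s = Inf {x \<in> S. a \<le> x}"
    have sS: "s \<in> S" unfolding s_def by (rule SL_Inf[OF S]) blast
    have as: "a \<le> s" unfolding s_def by (rule Inf_greatest) simp
    have tF: "himp s a \<in> \<Inter>F"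
    proof
      fix T assume TF: "T \<in> F"
      have "a \<in> {inf s t |s t. s \<in> S \<and> t \<in> T}" using M[OF TF] meet_char[OF fr S FS[OF TF]] by simp
      then obtain s1 t1 where a: "a = inf s1 t1" "s1 \<in> S" "t1 \<in> T" by blast
      have ss1: "s \<le> s1" unfolding s_def by (rule Inf_lower) (use a in simp)
      have "himp s a = himp s t1"
      proof (rule antisym)
        have 1: "inf (himp s a) s \<le> a" using himp_iff[OF fr, of "himp s a" s a] by simp
        have 2: "a \<le> t1" using a by simp
        show "himp s a \<le> himp s t1" unfolding himp_iff[OF fr]
          using 1 2 by (rule order_trans)
        have 3: "inf (himp s t1) s \<le> t1" using himp_iff[OF fr, of "himp s t1" s t1] by simp
        have 4: "inf (himp s t1) s \<le> s1" using ss1 by (meson inf_le2 order_trans)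
        show "himp s t1 \<le> himp s a" unfolding himp_iff[OF fr]
          using 3 4 a(1) by simp
      qed
      then show "himp s a \<in> T" using SL_himp[OF FS[OF TF] a(3)] by simp
    qed
    have "inf s (himp s a) = a"
    proof (rule antisym)
      show "inf s (himp s a) \<le> a" using himp_iff[OF fr, of "himp s a" s a] by (simp add: inf_commute)
      show "a \<le> inf s (himp s a)" using as himp_iff[OF fr, of a s a] by simp
    qed
    then have "a = inf s (himp s a) \<and> s \<in> S \<and> himp s a \<in> \<Inter>F"
      using sS tF by (intro conjI) (rule sym)
    then have "a \<in> {inf s t |s t. s \<in> S \<and> t \<in> \<Inter>F}"
      by (intro CollectI exI)
    then show ?thesis using meet_char[OF fr S IS] by simp
  qed
  then show ?thesis by blast
qed

lemma pc_SL: "SL (coS_pc S)"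
  unfolding coS_pc_def coS_Sup_def by (rule SL_Inter) blast

lemma pc_least: "SL T \<Longrightarrow> coS_meet T S = UNIV \<Longrightarrow> coS_pc S \<subseteq> T"
  unfolding coS_pc_def coS_Sup_def coS_bot_def by blast

lemma pc_meet:
  fixes S :: "'a::complete_lattice set"
  assumes fr: "is_frame TYPE('a)" and S: "SL S"
  shows "coS_meet (coS_pc S) S = UNIV"
  unfolding coS_pc_def coS_Sup_def coS_bot_def meet_comm[of _ S]
  by (rule distrib[OF fr S]) (auto simp: meet_comm)

lemma pc_anti: "S' \<subseteq> S \<Longrightarrow> coS_pc S \<subseteq> coS_pc S'"
proof -
  assume "S' \<subseteq> S"
  then have "coS_meet T S' = UNIV \<Longrightarrow> coS_meet T S = UNIV" for T
    using meet_mono[of T T S' S] by blast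
  then show ?thesis unfolding coS_pc_def coS_Sup_def coS_bot_def by blast
qed

lemma pc_UNIV: "coS_pc (UNIV::'a::complete_lattice set) = {top}"
proof -
  have "coS_meet T UNIV = UNIV" for T :: "'a set" using meet_upper2[of UNIV T] by blast
  then have "coS_pc (UNIV::'a set) = \<Inter>{T. SL T}" unfolding coS_pc_def coS_Sup_def coS_bot_def by simp
  also have "\<dots> = {top}" using SL_topset SL_top by blast
  finally show ?thesis .
qed

lemma pc_topset: "coS_pc {top::'a::complete_lattice} = UNIV"
proof -
  have "SL T \<Longrightarrow> coS_meet T {top} = UNIV \<Longrightarrow> T = UNIV" for T :: "'a set"
    using meet_least[of T T "{top}"] SL_top by blast
  moreover have "coS_meet UNIV {top::'a} = UNIV" using meet_upper1 by blast
  ultimately have "{T. SL T \<and> coS_meet T {top::'a} = UNIV} = {UNIV}" using SL_UNIV by blast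
  then show ?thesis unfolding coS_pc_def coS_Sup_def coS_bot_def by simp
qed

lemma pcpc:
  fixes S :: "'a::complete_lattice set"
  assumes fr: "is_frame TYPE('a)" and S: "SL S"
  shows "coS_pc (coS_pc S) \<subseteq> S"
  using pc_least[OF S] pc_meet[OF fr S] meet_comm by metis


lemma Fbar_SL: "Fbar f \<Longrightarrow> SL (f x)"
  by (drule Fbar_def[THEN iffD1, THEN conjunct1]) simp
lemma Fbar_r1: "Fbar f \<Longrightarrow> s \<le> r \<Longrightarrow> coS_meet (f (Up r)) (f (Down s)) = UNIV"
  by (drule Fbar_def[THEN iffD1, THEN conjunct2, THEN conjunct1]) (simp add: coS_bot_def)
lemma Fbar_r3: "Fbar f \<Longrightarrow> f (Up r) = \<Inter>{f (Up s) | s. s > r}"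
  by (drule Fbar_def[THEN iffD1, THEN conjunct2, THEN conjunct2, THEN conjunct1]) (unfold coS_Sup_def, erule spec)
lemma Fbar_r4: "Fbar f \<Longrightarrow> f (Down s) = \<Inter>{f (Down r) | r. r < s}"
  by (drule Fbar_def[THEN iffD1, THEN conjunct2, THEN conjunct2, THEN conjunct2, THEN conjunct1]) (unfold coS_Sup_def, erule spec)
lemma Fbar_pc1: "Fbar f \<Longrightarrow> r < s \<Longrightarrow> f (Down s) \<subseteq> coS_pc (f (Up r))"
  by (drule Fbar_def[THEN iffD1, THEN conjunct2, THEN conjunct2, THEN conjunct2, THEN conjunct2]) (simp add: coS_le_def)
lemma Fbar_pc2: "Fbar f \<Longrightarrow> r < s \<Longrightarrow> f (Up r) \<subseteq> coS_pc (f (Down s))"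
  by (drule Fbar_def[THEN iffD1, THEN conjunct2, THEN conjunct2, THEN conjunct2, THEN conjunct2]) (simp add: coS_le_def)

lemma fD_mono: "Fbar f \<Longrightarrow> r \<le> s \<Longrightarrow> f (Down s) \<subseteq> f (Down r)"
proof (cases "r = s")
  case False
  assume F: "Fbar f" and "r \<le> s"
  with False have "r < s" by simp
  then have "f (Down r) \<in> {f (Down r) |r. r < s}" by blast
  then have "\<Inter>{f (Down r) |r. r < s} \<subseteq> f (Down r)" by (rule Inter_lower)
  then show ?thesis using Fbar_r4[OF F, of s] by simp
qed simp

lemma key_dd:
  fixes f :: "gen \<Rightarrow> 'a::complete_lattice set"
  assumes fr: "is_frame TYPE('a)" and F: "Fbar f" and rs: "r < s"
  shows "f (Down s) \<subseteq> coS_pc (coS_pc (f (Down r)))"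
proof -
  have "coS_pc (f (Down r)) \<subseteq> f (Up r)"
    by (rule pc_least[OF Fbar_SL[OF F] Fbar_r1[OF F]]) simp
  then have "coS_pc (f (Up r)) \<subseteq> coS_pc (coS_pc (f (Down r)))" by (rule pc_anti)
  with Fbar_pc1[OF F rs] show ?thesis by (rule subset_trans)
qed

lemma Fbar_posinf: "Fbar (posinf :: gen \<Rightarrow> 'a::complete_lattice set)"
proof -
  have "coS_meet {top::'a} UNIV = UNIV" using meet_upper2 by blast
  moreover have "\<exists>s. s > (r::rat)" for r by (rule exI[of _ "r+1"]) simp
  moreover have "\<exists>r. r < (s::rat)" for s by (rule exI[of _ "s-1"]) simp
  ultimately show ?thesis
    unfolding Fbar_def posinf_def coS_top_def coS_bot_def coS_Sup_def coS_le_def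
    using SL_topset SL_UNIV pc_UNIV pc_topset by (auto split: gen.split)
qed

lemma g_posinf:
  fixes g :: "gen \<Rightarrow> 'a::complete_lattice set"
  assumes G: "Fbar g" and D: "\<And>s. g (Down s) = UNIV"
  shows "g = posinf"
proof
  fix x show "g x = posinf x"
  proof (cases x)
    case (Up r)
    have "g (Up r) \<subseteq> coS_pc (g (Down (r+1)))" by (rule Fbar_pc2[OF G]) simp
    also have "\<dots> = {top}" by (simp only: D pc_UNIV)
    finally have "g (Up r) \<subseteq> {top}" .
    then show ?thesis using Up SL_top[OF Fbar_SL[OF G]] unfolding posinf_def coS_top_def by auto
  next
    case (Down s) then show ?thesis using D unfolding posinf_def coS_bot_def by simp
  qed
qed

lemma join_not:
  fixes f g :: "gen \<Rightarrow> 'a::complete_lattice set"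
  assumes fr: "is_frame TYPE('a)" and F: "Fbar f" and G: "Fbar g"
    and nz: "coS_meet (f (Down t)) (g (Down t)) \<noteq> UNIV"
  shows "\<not> Fjoin_is f g posinf"
proof
  assume J: "Fjoin_is f g posinf"
  define a where "a r = coS_meet (f (Down r)) (g (Down r))" for r
  define c where "c s = \<Inter>{a r | r. r < s}" for s
  define e where "e r = \<Inter>{coS_pc (c s) | s. s > r}" for r
  define k where "k x = (case x of Up r \<Rightarrow> e r | Down s \<Rightarrow> c s)" for x
  have aSL: "SL (a r)" for r unfolding a_def by (rule meet_SL)
  have cSL: "SL (c s)" for s unfolding c_def by (rule SL_Inter) (auto simp: aSL)
  have eSL: "SL (e r)" for r unfolding e_def by (rule SL_Inter) (auto simp: pc_SL)
  have fDa: "f (Down s) \<subseteq> a r" if "r < s" for r s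
    using fD_mono[OF F, of r s] that meet_upper1 unfolding a_def by fastforce
  have gDa: "g (Down s) \<subseteq> a r" if "r < s" for r s
    using fD_mono[OF G, of r s] that meet_upper2 unfolding a_def by fastforce
  have fDc: "f (Down s) \<subseteq> c s" for s unfolding c_def using fDa by blast
  have gDc: "g (Down s) \<subseteq> c s" for s unfolding c_def using gDa by blast
  have a_mono: "a s \<subseteq> a r" if "r \<le> s" for r s
    unfolding a_def by (rule meet_mono) (use fD_mono[OF F that] fD_mono[OF G that] in auto)
  have c_a: "c s \<subseteq> a r" if "r < s" for r s unfolding c_def using that by blast
  have c_mono: "c s \<subseteq> c r" if "r \<le> s" for r s unfolding c_def
    by (rule Inter_anti_mono) (use that in \<open>auto intro: less_le_trans\<close>)
  have a_dd: "a s \<subseteq> coS_pc (coS_pc (a r))" if rs: "r < s" for r s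
  proof -
    have "coS_pc (coS_pc (f (Down r))) \<subseteq> coS_pc (coS_pc (a r))"
      by (intro pc_anti) (simp add: a_def meet_upper1)
    moreover have "coS_pc (coS_pc (g (Down r))) \<subseteq> coS_pc (coS_pc (a r))"
      by (intro pc_anti) (simp add: a_def meet_upper2)
    ultimately show ?thesis unfolding a_def[of s]
      using key_dd[OF fr F rs] key_dd[OF fr G rs] by (intro meet_least pc_SL) auto
  qed
  have Fk: "Fbar k"
    unfolding Fbar_def
  proof (intro conjI allI impI)
    fix x show "SL (k x)" by (cases x) (auto simp: k_def eSL cSL)
  next
    fix r s :: rat assume sr: "s \<le> r"
    have "coS_meet (c s) (e r) = UNIV" unfolding e_def
    proof (rule distrib[OF fr cSL])
      fix T assume "T \<in> {coS_pc (c s') | s'. s' > r}"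
      then obtain s' where T: "T = coS_pc (c s')" and s': "s' > r" by blast
      have "c s' \<subseteq> c s" using c_mono s' sr by simp
      then have "coS_meet (coS_pc (c s')) (c s') \<subseteq> coS_meet (coS_pc (c s')) (c s)"
        by (intro meet_mono) auto
      then show "coS_meet (c s) T = UNIV" using pc_meet[OF fr cSL, of s'] T meet_comm by blast
    qed (auto simp: pc_SL)
    then show "coS_meet (k (Up r)) (k (Down s)) = coS_bot"
      by (simp add: k_def coS_bot_def meet_comm)
  next
    fix r
    have "e r = \<Inter>{e s | s. s > r}"
    proof
      have "e r \<subseteq> e s" if "s > r" for s unfolding e_def
        by (rule Inter_anti_mono) (use that in \<open>auto intro: less_trans\<close>)
      then show "e r \<subseteq> \<Inter>{e s | s. s > r}" by blast
      show "\<Inter>{e s | s. s > r} \<subseteq> e r"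
      proof
        fix x assume x: "x \<in> \<Inter>{e s | s. s > r}"
        show "x \<in> e r" unfolding e_def
        proof
          fix T assume "T \<in> {coS_pc (c s) | s. s > r}"
          then obtain s where T: "T = coS_pc (c s)" and s: "s > r" by blast
          obtain m where m: "r < m" "m < s" using dense[OF s] by blast
          have "x \<in> e m" using x m by blast
          then show "x \<in> T" using T m unfolding e_def by blast
        qed
      qed
    qed
    then show "k (Up r) = coS_Sup {k (Up s) |s. s > r}" by (simp add: k_def coS_Sup_def)
  next
    fix s
    have "c s = \<Inter>{c r | r. r < s}"
    proof
      show "c s \<subseteq> \<Inter>{c r | r. r < s}"
      proof (rule Inter_greatest)
        fix X assume "X \<in> {c r | r. r < s}"
        then obtain r where "X = c r" "r < s" by blast
        then show "c s \<subseteq> X" using c_mono[of r s] by simp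
      qed
      show "\<Inter>{c r | r. r < s} \<subseteq> c s"
      proof
        fix x assume x: "x \<in> \<Inter>{c r | r. r < s}"
        show "x \<in> c s" unfolding c_def
        proof
          fix T assume "T \<in> {a r | r. r < s}"
          then obtain r where T: "T = a r" and r: "r < s" by blast
          obtain m where m: "r < m" "m < s" using dense[OF r] by blast
          have "x \<in> c m" using x m by blast
          then show "x \<in> T" using T m unfolding c_def by blast
        qed
      qed
    qed
    then show "k (Down s) = coS_Sup {k (Down r) |r. r < s}" by (simp add: k_def coS_Sup_def)
  next
    fix r s :: rat assume rs: "r < s"
    obtain m where m: "r < m" "m < s" using dense[OF rs] by blast
    obtain n where n: "m < n" "n < s" using dense[OF m(2)] by blast
    have 1: "c s \<subseteq> a n" using c_a n by simp
    have 2: "a n \<subseteq> coS_pc (coS_pc (a m))" using a_dd n by simp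
    have "a m \<subseteq> c m" unfolding c_def
    proof (rule Inter_greatest)
      fix X assume "X \<in> {a r | r. r < m}"
      then obtain r where "X = a r" "r < m" by blast
      then show "a m \<subseteq> X" using a_mono[of r m] by simp
    qed
    then have 3: "coS_pc (coS_pc (a m)) \<subseteq> coS_pc (coS_pc (c m))"
      by (intro pc_anti)
    have "e r \<subseteq> coS_pc (c m)" unfolding e_def using m by blast
    then have 4: "coS_pc (coS_pc (c m)) \<subseteq> coS_pc (e r)" by (rule pc_anti)
    have "c s \<subseteq> coS_pc (e r)" using 1 2 3 4 by blast
    then show "coS_le (coS_pc (k (Up r))) (k (Down s))"
      by (simp add: k_def coS_le_def)
  next
    fix r s :: rat assume rs: "r < s"
    have "e r \<subseteq> coS_pc (c s)" unfolding e_def using rs by blast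
    then show "coS_le (coS_pc (k (Down s))) (k (Up r))"
      by (simp add: k_def coS_le_def)
  qed
  have upk: "e r \<subseteq> h (Up r)" if H: "Fbar h" and hD: "\<And>s. h (Down s) \<subseteq> c s" for h r
  proof -
    have "e r \<subseteq> h (Up s)" if s: "s > r" for s
    proof -
      have "coS_meet (h (Up s)) (h (Down s)) \<subseteq> coS_meet (h (Up s)) (c s)"
        using hD by (intro meet_mono) auto
      then have "coS_meet (h (Up s)) (c s) = UNIV" using Fbar_r1[OF H, of s s] by auto
      then have "coS_pc (c s) \<subseteq> h (Up s)" by (rule pc_least[OF Fbar_SL[OF H]])
      moreover have "e r \<subseteq> coS_pc (c s)" unfolding e_def using s by blast
      ultimately show ?thesis by blast
    qed
    then show ?thesis using Fbar_r3[OF H, of r] by blast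
  qed
  have Ff: "Fle f k" unfolding Fle_def coS_le_def k_def using upk[OF F fDc] fDc by simp
  have Fg: "Fle g k" unfolding Fle_def coS_le_def k_def using upk[OF G gDc] gDc by simp
  from J Fk Ff Fg have "Fle posinf k" unfolding Fjoin_is_def by blast
  then have "UNIV \<subseteq> c (t+1)" unfolding Fle_def coS_le_def k_def posinf_def coS_bot_def by force
  moreover have "c (t+1) \<subseteq> a t" using c_a by simp
  ultimately show False using nz a_def by blast
qed


lemma dir21:
  fixes f g :: "gen \<Rightarrow> 'a::complete_lattice set"
  assumes fr: "is_frame TYPE('a)" and F: "Fbar f"
    and P: "coS_pc (\<Inter>(range (\<lambda>s. f (Down s)))) = UNIV"
    and G: "Fbar g" and J: "Fjoin_is f g posinf"
  shows "g = posinf"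
proof (rule g_posinf[OF G])
  fix s0
  show "g (Down s0) = UNIV"
  proof (rule ccontr)
    assume ne: "g (Down s0) \<noteq> UNIV"
    have "\<exists>s1. coS_meet (g (Down s0)) (f (Down s1)) \<noteq> UNIV"
    proof (rule ccontr)
      assume "\<not> ?thesis"
      then have "coS_meet (g (Down s0)) (\<Inter>(range (\<lambda>s. f (Down s)))) = UNIV"
        by (intro distrib[OF fr Fbar_SL[OF G]]) (auto simp: Fbar_SL[OF F])
      then have "coS_pc (\<Inter>(range (\<lambda>s. f (Down s)))) \<subseteq> g (Down s0)"
        by (intro pc_least[OF Fbar_SL[OF G]]) (simp add: meet_comm)
      then show False using P ne by auto
    qed
    then obtain s1 where s1: "coS_meet (g (Down s0)) (f (Down s1)) \<noteq> UNIV" by blast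
    define t where "t = max s0 s1"
    have "coS_meet (f (Down t)) (g (Down t)) \<subseteq> coS_meet (g (Down s0)) (f (Down s1))"
      unfolding meet_comm[of "g (Down s0)"]
      by (intro meet_mono fD_mono[OF F] fD_mono[OF G]) (auto simp: t_def)
    then have "coS_meet (f (Down t)) (g (Down t)) \<noteq> UNIV" using s1 by blast
    then show False using join_not[OF fr F G] J by blast
  qed
qed

lemma dir12:
  fixes f :: "gen \<Rightarrow> 'a::complete_lattice set"
  assumes fr: "is_frame TYPE('a)" and F: "Fbar f"
    and H: "\<forall>g. Fbar g \<and> Fjoin_is f g posinf \<longrightarrow> g = posinf"
  shows "coS_pc (\<Inter>(range (\<lambda>s. f (Down s)))) = UNIV"
proof (rule ccontr)
  define D where "D = \<Inter>(range (\<lambda>s. f (Down s)))"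
  define d where "d = coS_pc D"
  assume "coS_pc (\<Inter>(range (\<lambda>s. f (Down s)))) \<noteq> UNIV"
  then have dne: "d \<noteq> UNIV" unfolding d_def D_def by simp
  have DSL: "SL D" unfolding D_def by (rule SL_Inter) (auto simp: Fbar_SL[OF F])
  have dSL: "SL d" unfolding d_def by (rule pc_SL)
  have dreg: "d \<subseteq> coS_pc (coS_pc d)" unfolding d_def
    by (rule pc_anti) (rule pcpc[OF fr DSL])
  define g :: "gen \<Rightarrow> 'a set" where "g x = (case x of Up r \<Rightarrow> coS_pc d | Down s \<Rightarrow> d)" for x
  have G: "Fbar g"
    unfolding Fbar_def
  proof (intro conjI allI impI)
    fix x show "SL (g x)" by (cases x) (auto simp: g_def dSL pc_SL)
  next
    fix r s :: rat
    show "coS_meet (g (Up r)) (g (Down s)) = coS_bot"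
      using pc_meet[OF fr dSL] by (simp add: g_def coS_bot_def)
  next
    fix r :: rat
    have "{g (Up s) |s. s > r} = {coS_pc d}" by (auto simp: g_def intro: exI[of _ "r+1"])
    then show "g (Up r) = coS_Sup {g (Up s) |s. s > r}" by (simp add: g_def coS_Sup_def)
  next
    fix s :: rat
    have "{g (Down r) |r. r < s} = {d}" by (auto simp: g_def intro: exI[of _ "s-1"])
    then show "g (Down s) = coS_Sup {g (Down r) |r. r < s}" by (simp add: g_def coS_Sup_def)
  next
    fix r s :: rat
    show "coS_le (coS_pc (g (Up r))) (g (Down s))"
      using dreg by (simp add: g_def coS_le_def)
  next
    fix r s :: rat
    show "coS_le (coS_pc (g (Down s))) (g (Up r))"
      by (simp add: g_def coS_le_def)
  qed
  have J: "Fjoin_is f g posinf"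
    unfolding Fjoin_is_def
  proof (intro conjI allI impI)
    show "Fbar (posinf :: gen \<Rightarrow> 'a set)" by (rule Fbar_posinf)
    show "Fle f posinf" unfolding Fle_def coS_le_def posinf_def coS_top_def coS_bot_def
      using SL_top[OF Fbar_SL[OF F]] by auto
    show "Fle g posinf" unfolding Fle_def coS_le_def posinf_def coS_top_def coS_bot_def
      using SL_top[OF Fbar_SL[OF G]] by auto
  next
    fix k :: "gen \<Rightarrow> 'a set"
    assume K: "Fbar k \<and> Fle f k \<and> Fle g k"
    have kD: "k (Down s) = UNIV" for s
    proof -
      have "D \<subseteq> k (Down s)" using K unfolding Fle_def coS_le_def D_def by blast
      moreover have "d \<subseteq> k (Down s)" using K unfolding Fle_def coS_le_def g_def by auto
      ultimately have "coS_meet D d \<subseteq> k (Down s)" using K Fbar_SL by (intro meet_least) blast+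
      then show ?thesis using pc_meet[OF fr DSL] meet_comm unfolding d_def by blast
    qed
    have "k = posinf" using g_posinf K kD by blast
    then show "Fle posinf k" unfolding Fle_def coS_le_def by simp
  qed
  have "g = posinf" using H G J by blast
  then have "g (Down 0) = UNIV" by (simp add: posinf_def coS_bot_def)
  then show False using dne by (simp add: g_def)
qed

lemma dir23:
  fixes f :: "gen \<Rightarrow> 'a::complete_lattice set"
  assumes fr: "is_frame TYPE('a)" and F: "Fbar f"
    and P: "coS_pc (\<Inter>(range (\<lambda>s. f (Down s)))) = UNIV"
  shows "coS_Inf (range (\<lambda>r. f (Up r))) = UNIV"
proof -
  define U where "U = coS_Inf (range (\<lambda>r. f (Up r)))"
  have USL: "SL U" unfolding U_def coS_Inf_def by (rule SL_Inter) blast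
  have fU: "f (Up r) \<subseteq> U" for r unfolding U_def coS_Inf_def by blast
  have "coS_meet U (\<Inter>(range (\<lambda>s. f (Down s)))) = UNIV"
  proof (rule distrib[OF fr USL])
    fix T assume "T \<in> range (\<lambda>s. f (Down s))"
    then obtain s where T: "T = f (Down s)" by blast
    have "coS_meet (f (Up s)) (f (Down s)) \<subseteq> coS_meet U T" using fU T by (intro meet_mono) auto
    then show "coS_meet U T = UNIV" using Fbar_r1[OF F, of s s] by auto
  qed (auto simp: Fbar_SL[OF F])
  then have "coS_pc (\<Inter>(range (\<lambda>s. f (Down s)))) \<subseteq> U" by (rule pc_least[OF USL])
  then show ?thesis using P unfolding U_def by auto
qed

lemma dir32:
  fixes f :: "gen \<Rightarrow> 'a::complete_lattice set"
  assumes F: "Fbar f" and P: "coS_Inf (range (\<lambda>r. f (Up r))) = UNIV"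
  shows "coS_pc (\<Inter>(range (\<lambda>s. f (Down s)))) = UNIV"
proof -
  have "f (Up r) \<subseteq> coS_pc (\<Inter>(range (\<lambda>s. f (Down s))))" for r
  proof -
    have "f (Up r) \<subseteq> coS_pc (f (Down (r+1)))" using Fbar_pc2[OF F] by simp
    also have "\<dots> \<subseteq> coS_pc (\<Inter>(range (\<lambda>s. f (Down s))))" by (rule pc_anti) blast
    finally show ?thesis .
  qed
  then have "coS_Inf (range (\<lambda>r. f (Up r))) \<subseteq> coS_pc (\<Inter>(range (\<lambda>s. f (Down s))))"
    unfolding coS_Inf_def using pc_SL by blast
  then show ?thesis using P by auto
qed

theorem proposition5p3:
  fixes f :: "gen \<Rightarrow> 'a::complete_lattice set"
  assumes "is_frame TYPE('a)"
    and "Fbar f"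
  shows "((\<forall>g. Fbar g \<and> Fjoin_is f g posinf \<longrightarrow> g = posinf)
            \<longleftrightarrow> coS_pc (coS_Sup (range (\<lambda>s. f (Down s)))) = coS_bot)
       \<and> (coS_pc (coS_Sup (range (\<lambda>s. f (Down s)))) = coS_bot
            \<longleftrightarrow> coS_Inf (range (\<lambda>r. f (Up r))) = coS_bot)"
  unfolding coS_Sup_def coS_bot_def
  using dir12[OF assms] dir21[OF assms] dir23[OF assms] dir32[OF assms(2)] by blast

end
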